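(* Let $a>0$, $b\ge0$, $\mu>0$, and let $V,Q,f$ satisfy $(V_1)$–$(V_3)$, $(Q)$, $(f_1)$–$(f_4)$ (see context). Let $(u_n)\subset X$ be such that there is $d>0$ with $I(u_n)\le d$ for all $n$ and $\|I'(u_n)\|_{X'}(1+\|u_n\|_X)\to0$ as $n\to\infty$. Then $(u_n)$ is bounded in $H^1(\mathbb R^2)$.
   Context: $V:(0,\infty)\to\mathbb R$ continuous, $V^\pm=\max\{\pm V,0\}$: $(V_1)$ there are $a_1,a_2$ with $a_2\in L^\infty$, $\inf_{t\ge2}a_1>0$, $\inf_{t>0}a_2>0$, $a_1(t)\ln(1+t)\le V^+(t)\le a_2(t)\ln(1+t)$, $t>0$; $(V_2)$ there is $a_3$, positive on a set of positive measure, with $V^-(t)\le a_3(t)/t$ and either $a_3\in L^\infty$ or $a_3(t)=t^{-\lambda}$, $\lambda\in[1,3)$; $(V_3)$ $V<0$ on some open $\mathcal I\subset(0,\infty)$. $(Q)$: $Q\in C(\mathbb R^2)$, $\inf Q=Q_0>0$, $Q\in L^p(\mathbb R^2)$, some $p\in(1,\infty]$. $F(t)=\int_0^tf$; $(f_1)$ $f$ continuous, $f(0)=0$, $\lim_{s\to+\infty}f(s)/(e^{\alpha s^2}-1)=0$ for $\alpha>4\pi$, $=+\infty$ for $\alpha<4\pi$; $(f_2)$ $|f(t)|/|t|^\tau\to0$ as $t\to0$, some $\tau>1$; $(f_3)$ $f(t)t\ge\theta F(t)>0$ for $t\ne0$, some $\theta\ge4$; $(f_4)$ $F(t)\ge C_q|t|^q$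 for all $t$, some $q>4$, $C_q>0$. $X=\{u\in H^1(\mathbb R^2):\int\ln(1+|x|)u^2<\infty\}$, $\|u\|_X^2=\|\nabla u\|_2^2+\|u\|_2^2+\int\ln(1+|x|)u^2$, $X'$ its dual. $P(u)=\iint V(|x-y|)u^2(x)u^2(y)dxdy$, $I(u)=\frac a2\|\nabla u\|_2^2+\frac b4\|\nabla u\|_2^4+\frac12\int Qu^2+\frac\mu4P(u)-\int F(u)$, a $C^1$ functional on $X$. *)

theory Defs
  imports "HOL-Analysis.Analysis"
begin

type_synonym R2 = "real^2"

definition test_fun :: "(R2 \<Rightarrow> real) \<Rightarrow> bool" where
  "test_fun \<phi> \<longleftrightarrow> compact (closure {x. \<phi> x \<noteq> 0}) \<and> (\<forall>x. \<phi> differentiable (at x)) \<and>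
     (\<forall>i. continuous_on UNIV (\<lambda>x. frechet_derivative \<phi> (at x) (axis i 1)))"

definition weak_grad :: "(R2 \<Rightarrow> real) \<Rightarrow> (R2 \<Rightarrow> R2) \<Rightarrow> bool" where
  "weak_grad u g \<longleftrightarrow> (\<forall>\<phi>. test_fun \<phi> \<longrightarrow> (\<forall>i.
      (\<integral>x. u x * frechet_derivative \<phi> (at x) (axis i 1) \<partial>lborel) = - (\<integral>x. g x $ i * \<phi> x \<partial>lborel)))"

definition L2_grad :: "(R2 \<Rightarrow> real) \<Rightarrow> (R2 \<Rightarrow> R2) \<Rightarrow> bool" where
  "L2_grad u g \<longleftrightarrow> g \<in> borel_measurable lborel \<and> integrable lborel (\<lambda>x. (norm (g x))\<^sup>2) \<and> weak_grad u g"

definition H1 :: "(R2 \<Rightarrow> real) set" where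
  "H1 = {u. u \<in> borel_measurable lborel \<and> integrable lborel (\<lambda>x. (u x)\<^sup>2) \<and> (\<exists>g. L2_grad u g)}"

definition grad :: "(R2 \<Rightarrow> real) \<Rightarrow> (R2 \<Rightarrow> R2)" where
  "grad u = (SOME g. L2_grad u g)"

definition grad_norm2 :: "(R2 \<Rightarrow> real) \<Rightarrow> real" where
  "grad_norm2 u = (\<integral>x. (norm (grad u x))\<^sup>2 \<partial>lborel)"

definition L2_norm2 :: "(R2 \<Rightarrow> real) \<Rightarrow> real" where
  "L2_norm2 u = (\<integral>x. (u x)\<^sup>2 \<partial>lborel)"

definition H1_norm :: "(R2 \<Rightarrow> real) \<Rightarrow> real" where
  "H1_norm u = sqrt (grad_norm2 u + L2_norm2 u)"

definition Xspace :: "(R2 \<Rightarrow> real) set" where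
  "Xspace = {u \<in> H1. integrable lborel (\<lambda>x. ln (1 + norm x) * (u x)\<^sup>2)}"

definition X_norm :: "(R2 \<Rightarrow> real) \<Rightarrow> real" where
  "X_norm u = sqrt (grad_norm2 u + L2_norm2 u + (\<integral>x. ln (1 + norm x) * (u x)\<^sup>2 \<partial>lborel))"

definition prim :: "(real \<Rightarrow> real) \<Rightarrow> real \<Rightarrow> real" where
  "prim f t = (if 0 \<le> t then integral {0..t} f else - integral {t..0} f)"

definition Pfun :: "(real \<Rightarrow> real) \<Rightarrow> (R2 \<Rightarrow> real) \<Rightarrow> real" where
  "Pfun V u = (\<integral>x. (\<integral>y. V (norm (x - y)) * (u x)\<^sup>2 * (u y)\<^sup>2 \<partial>lborel) \<partial>lborel)"

definition Ifun :: "real \<Rightarrow> real \<Rightarrow> real \<Rightarrow> (R2 \<Rightarrow> real) \<Rightarrow> (real \<Rightarrow> real) \<Rightarrow> (real \<Rightarrow> real)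
                    \<Rightarrow> (R2 \<Rightarrow> real) \<Rightarrow> real" where
  "Ifun a b \<mu> Q V f u = a / 2 * grad_norm2 u + b / 4 * (grad_norm2 u)\<^sup>2
      + 1 / 2 * (\<integral>x. Q x * (u x)\<^sup>2 \<partial>lborel) + \<mu> / 4 * Pfun V u
      - (\<integral>x. prim f (u x) \<partial>lborel)"

definition frechet_X :: "((R2 \<Rightarrow> real) \<Rightarrow> real) \<Rightarrow> (R2 \<Rightarrow> real) \<Rightarrow> ((R2 \<Rightarrow> real) \<Rightarrow> real) \<Rightarrow> bool" where
  "frechet_X J u D \<longleftrightarrow>
     (\<forall>v\<in>Xspace. \<forall>w\<in>Xspace. \<forall>s t. D (\<lambda>x. s * v x + t * w x) = s * D v + t * D w) \<and>
     (\<exists>C. \<forall>v\<in>Xspace. \<bar>D v\<bar> \<le> C * X_norm v) \<and>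
     (\<forall>\<epsilon>>0. \<exists>\<delta>>0. \<forall>h\<in>Xspace. X_norm h < \<delta> \<longrightarrow>
         \<bar>J (\<lambda>x. u x + h x) - J u - D h\<bar> \<le> \<epsilon> * X_norm h)"

definition dual_norm :: "((R2 \<Rightarrow> real) \<Rightarrow> real) \<Rightarrow> real" where
  "dual_norm D = Sup ((\<lambda>v. \<bar>D v\<bar>) ` {v \<in> Xspace. X_norm v \<le> 1})"

definition posp :: "(real \<Rightarrow> real) \<Rightarrow> real \<Rightarrow> real" where "posp V t = max (V t) 0"
definition negp :: "(real \<Rightarrow> real) \<Rightarrow> real \<Rightarrow> real" where "negp V t = max (- V t) 0"

definition Linf_pos :: "(real \<Rightarrow> real) \<Rightarrow> bool" where
  "Linf_pos a \<longleftrightarrow> a \<in> borel_measurable lborel \<and> (\<exists>M. AE t in lborel. 0 < t \<longrightarrow> \<bar>a t\<bar> \<le> M)"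

definition cond_V1 :: "(real \<Rightarrow> real) \<Rightarrow> bool" where
  "cond_V1 V \<longleftrightarrow> (\<exists>a1 a2. Linf_pos a2 \<and> (\<exists>c>0. \<forall>t\<ge>2. a1 t \<ge> c) \<and> (\<exists>c>0. \<forall>t>0. a2 t \<ge> c) \<and>
      (\<forall>t>0. a1 t * ln (1 + t) \<le> posp V t \<and> posp V t \<le> a2 t * ln (1 + t)))"

definition cond_V2 :: "(real \<Rightarrow> real) \<Rightarrow> bool" where
  "cond_V2 V \<longleftrightarrow> (\<exists>a3. a3 \<in> borel_measurable lborel \<and> emeasure lborel {t. 0 < t \<and> 0 < a3 t} > 0 \<and>
      (\<forall>t>0. negp V t \<le> a3 t / t) \<and>
      (Linf_pos a3 \<or> (\<exists>lam. 1 \<le> lam \<and> lam < 3 \<and> (\<forall>t>0. a3 t = t powr (- lam)))))"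

definition cond_V3 :: "(real \<Rightarrow> real) \<Rightarrow> bool" where
  "cond_V3 V \<longleftrightarrow> (\<exists>I. open I \<and> I \<noteq> {} \<and> I \<subseteq> {0<..} \<and> (\<forall>t\<in>I. V t < 0))"

definition cond_Q :: "(R2 \<Rightarrow> real) \<Rightarrow> bool" where
  "cond_Q Q \<longleftrightarrow> continuous_on UNIV Q \<and> (\<exists>Q0>0. \<forall>x. Q0 \<le> Q x) \<and>
      ((\<exists>p>1. integrable lborel (\<lambda>x. \<bar>Q x\<bar> powr p)) \<or> (\<exists>M. AE x in lborel. \<bar>Q x\<bar> \<le> M))"

definition cond_f :: "(real \<Rightarrow> real) \<Rightarrow> bool" where
  "cond_f f \<longleftrightarrow> continuous_on UNIV f \<and> f 0 = 0 \<and>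
     (\<forall>\<alpha>>4*pi. ((\<lambda>s. f s / (exp (\<alpha> * s\<^sup>2) - 1)) \<longlongrightarrow> 0) at_top) \<and>
     (\<forall>\<alpha>. 0 < \<alpha> \<and> \<alpha> < 4*pi \<longrightarrow> filterlim (\<lambda>s. f s / (exp (\<alpha> * s\<^sup>2) - 1)) at_top at_top) \<and>
     (\<exists>\<tau>>1. ((\<lambda>t. \<bar>f t\<bar> / \<bar>t\<bar> powr \<tau>) \<longlongrightarrow> 0) (at 0)) \<and>
     (\<exists>\<theta>\<ge>4. \<forall>t. t \<noteq> 0 \<longrightarrow> f t * t \<ge> \<theta> * prim f t \<and> prim f t > 0) \<and>
     (\<exists>q>4. \<exists>C>0. \<forall>t. prim f t \<ge> C * \<bar>t\<bar> powr q)"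

end

theory Submission
  imports Defs
begin


lemma prim_eq:
  fixes f :: "real \<Rightarrow> real"
  assumes cf: "continuous_on UNIV f" and R: "-R \<le> t" "0 \<le> R"
  shows "prim f t = integral {-R..t} f - integral {-R..0} f"
proof (cases "0 \<le> t")
  case True
  have "integral {-R..0} f + integral {0..t} f = integral {-R..t} f"
    using R True by (intro Henstock_Kurzweil_Integration.integral_combine) (auto intro!: integrable_continuous_interval continuous_on_subset[OF cf])
  then show ?thesis using True by (simp add: prim_def)
next
  case False
  have "integral {-R..t} f + integral {t..0} f = integral {-R..0} f"
    using R False by (intro Henstock_Kurzweil_Integration.integral_combine) (auto intro!: integrable_continuous_interval continuous_on_subset[OF cf])
  then show ?thesis using False by (simp add: prim_def)
qed

lemma prim_deriv:
  fixes f :: "real \<Rightarrow> real"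
  assumes cf: "continuous_on UNIV f"
  shows "(prim f has_real_derivative f t) (at t)"
proof -
  define R where "R = \<bar>t\<bar> + 1"
  have R: "0 \<le> R" "-R < t" using R_def by auto
  have d: "((\<lambda>x. integral {-R..x} f - integral {-R..0} f) has_real_derivative f t) (at t within {-R..\<bar>t\<bar>+1})"
    using R by (auto intro!: derivative_eq_intros integral_has_real_derivative continuous_on_subset[OF cf])
  have d2: "((\<lambda>x. integral {-R..x} f - integral {-R..0} f) has_real_derivative f t) (at t)"
    using d R R_def by (subst (asm) at_within_interior) (auto)
  show ?thesis
    apply (rule has_field_derivative_transform_within_open[OF d2, of "{-R<..}"])
    using R cf prim_eq[OF cf, of R] by auto
qed



lemma prim_zero: "prim f 0 = 0"
  by (simp add: prim_def)

lemma F_scale_le: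
  fixes f :: "real \<Rightarrow> real"
  assumes cf: "continuous_on UNIV f"
    and ineq: "\<forall>t. t \<noteq> 0 \<longrightarrow> f t * t \<ge> \<theta> * prim f t \<and> prim f t > 0" and th: "\<theta> \<ge> 4"
    and s: "0 < s" "s \<le> 1"
  shows "prim f (s*y) \<le> s^4 * prim f y"
proof (cases "y = 0")
  case True then show ?thesis by (simp add: prim_zero)
next
  case False
  define h where "h r = prim f (r*y) / r^4" for r
  have dh: "((\<lambda>r. prim f (r*y) / r^4) has_real_derivative
      (f (r*y) * y * r^4 - prim f (r*y) * (4 * r^3)) / (r^4 * r^4)) (at r)" if "r > 0" for r
    using that
    by (auto intro!: derivative_eq_intros DERIV_chain2[OF prim_deriv[OF cf]] simp: power_eq_0_iff)
  have nn: "(f (r*y) * y * r^4 - prim f (r*y) * (4 * r^3)) / (r^4 * r^4) \<ge> 0" if "r > 0" for r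
  proof -
    have ry: "r*y \<noteq> 0" using that False by simp
    have i1: "f (r*y) * (r*y) \<ge> \<theta> * prim f (r*y)" "prim f (r*y) > 0"
      using ineq[rule_format, OF ry] by auto
    have "4 * prim f (r*y) \<le> \<theta> * prim f (r*y)" using i1(2) th by (intro mult_right_mono) auto
    then have "f (r*y) * (r*y) \<ge> 4 * prim f (r*y)" using i1 by linarith
    then have "r^3 * (f (r*y) * (r*y)) \<ge> r^3 * (4 * prim f (r*y))"
      using that by (intro mult_left_mono) auto
    then have "f (r*y) * y * r^4 - prim f (r*y) * (4 * r^3) \<ge> 0"
      by (simp add: power_numeral_reduce algebra_simps)
    then show ?thesis using that by simp
  qed
  have "h s \<le> h 1"
    unfolding h_def
  proof (rule DERIV_nonneg_imp_increasing_open[OF s(2)])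
    fix x assume "s < x" "x < 1"
    then show "\<exists>z. ((\<lambda>r. prim f (r * y) / r ^ 4) has_real_derivative z) (at x) \<and> 0 \<le> z"
      using dh nn s by (meson less_trans)
  next
    show "continuous_on {s..1} (\<lambda>r. prim f (r * y) / r ^ 4)"
    proof (intro continuous_at_imp_continuous_on ballI)
      fix x assume "x \<in> {s..1}"
      then have "x > 0" using s by auto
      from DERIV_isCont[OF dh[OF this]] show "isCont (\<lambda>r. prim f (r * y) / r ^ 4) x" .
    qed
  qed
  then show ?thesis using s by (simp add: h_def field_simps)
qed



lemma core:
  fixes g \<Phi> :: "real \<Rightarrow> real"
  assumes Fr: "\<forall>\<epsilon>>0. \<exists>\<delta>>0. \<forall>t. \<bar>t\<bar> * X < \<delta> \<longrightarrow> \<bar>g (1+t) - g 1 - t * Dv\<bar> \<le> \<epsilon> * (\<bar>t\<bar> * X)"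
    and X: "X \<ge> 0"
    and g: "\<forall>s. g s = \<alpha> * s^2 + \<beta> * s^4 - \<Phi> s"
    and cs: "(\<forall>s. 0<s \<and> s\<le>1 \<longrightarrow> \<Phi> s \<le> s^4 * \<Phi> 1) \<or> (\<Phi> 1 = 0 \<and> (\<forall>s. s\<ge>1 \<longrightarrow> \<Phi> s = 0))"
  shows "Dv \<le> 2*\<alpha> + 4*\<beta> - 4*\<Phi> 1"
proof -
  have eps: "Dv \<le> 2*\<alpha> + 4*\<beta> - 4*\<Phi> 1 + \<epsilon> * X" if e: "\<epsilon> > 0" for \<epsilon>
  proof -
    obtain \<delta> where d: "\<delta> > 0" and dd: "\<And>t. \<bar>t\<bar> * X < \<delta> \<Longrightarrow> \<bar>g (1+t) - g 1 - t * Dv\<bar> \<le> \<epsilon> * (\<bar>t\<bar> * X)"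
      using Fr e by blast
    have small: "\<bar>t\<bar> * X < \<delta>" if "\<bar>t\<bar> < \<delta> / (X+1)" for t
    proof -
      have "\<bar>t\<bar> * X \<le> \<bar>t\<bar> * (X+1)" using X by (simp add: mult_left_mono)
      also have "\<dots> < \<delta>" using that X by (simp add: field_simps)
      finally show ?thesis .
    qed
    have ev: "\<forall>\<^sub>F t in at_right 0. 0 < t \<and> t < min 1 (\<delta> / (X+1))"
    proof (intro eventually_conj eventually_at_right_less)
      have "min 1 (\<delta> / (X+1)) > 0" using d X by simp
      then show "\<forall>\<^sub>F t in at_right 0. t < min 1 (\<delta> / (X+1))"
        by (intro order_tendstoD(2)[OF tendsto_ident_at]) auto
    qed
    from cs show ?thesis
    proof
      assume c1: "\<forall>s. 0<s \<and> s\<le>1 \<longrightarrow> \<Phi> s \<le> s^4 * \<Phi> 1"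
      define E where "E t = \<alpha>*(2-t) + (\<beta> - \<Phi> 1)*(4 - 6*t + 4*t^2 - t^3) + \<epsilon> * X" for t
      have "\<forall>\<^sub>F t in at_right 0. Dv \<le> E t"
        using ev
      proof eventually_elim
        case (elim t)
        then have tX: "\<bar>-t\<bar> * X < \<delta>" using small[of t] by auto
        have "\<bar>g (1 + -t) - g 1 - (-t) * Dv\<bar> \<le> \<epsilon> * (\<bar>-t\<bar> * X)" by (rule dd[OF tX])
        then have "t * Dv \<le> g 1 - g (1-t) + \<epsilon> * t * X" using elim by auto
        also have "\<dots> = \<alpha>*(1 - (1-t)^2) + \<beta>*(1-(1-t)^4) - \<Phi> 1 + \<Phi> (1-t) + \<epsilon> * t * X"
          using g by (simp add: algebra_simps)
        also have "\<dots> \<le> \<alpha>*(1 - (1-t)^2) + \<beta>*(1-(1-t)^4) - \<Phi> 1 + (1-t)^4 * \<Phi> 1 + \<epsilon> * t * X"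
          using c1 elim by auto
        also have "\<dots> = t * E t" by (simp add: E_def algebra_simps power2_eq_square power4_eq_xxxx power3_eq_cube)
        finally show ?case using elim by simp
      qed
      moreover have "(E \<longlongrightarrow> E 0) (at_right 0)" unfolding E_def by (intro tendsto_intros)
      ultimately have "Dv \<le> E 0"
        by (intro tendsto_lowerbound[where F="at_right 0"]) (auto simp: eventually_mono)
      then show ?thesis by (simp add: E_def)
    next
      assume c2: "\<Phi> 1 = 0 \<and> (\<forall>s. s\<ge>1 \<longrightarrow> \<Phi> s = 0)"
      define E where "E t = \<alpha>*(2+t) + \<beta>*(4 + 6*t + 4*t^2 + t^3) + \<epsilon> * X" for t
      have "\<forall>\<^sub>F t in at_right 0. Dv \<le> E t"
        using ev
      proof eventually_elim
        case (elim t)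
        then have tX: "\<bar>t\<bar> * X < \<delta>" using small[of t] by auto
        have "\<bar>g (1 + t) - g 1 - t * Dv\<bar> \<le> \<epsilon> * (\<bar>t\<bar> * X)" by (rule dd[OF tX])
        then have "t * Dv \<le> g (1+t) - g 1 + \<epsilon> * t * X" using elim by auto
        also have "\<dots> = \<alpha>*((1+t)^2 - 1) + \<beta>*((1+t)^4 - 1) + \<epsilon> * t * X"
        proof -
          have "\<Phi> (1+t) = 0" using c2 elim by auto
          then have "g (1+t) = \<alpha>*(1+t)^2 + \<beta>*(1+t)^4" "g 1 = \<alpha> + \<beta>" using g c2 by auto
          then show ?thesis by (simp add: algebra_simps)
        qed
        also have "\<dots> = t * E t" by (simp add: E_def algebra_simps power2_eq_square power4_eq_xxxx power3_eq_cube)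
        finally show ?case using elim by simp
      qed
      moreover have "(E \<longlongrightarrow> E 0) (at_right 0)" unfolding E_def by (intro tendsto_intros)
      ultimately have "Dv \<le> E 0"
        by (intro tendsto_lowerbound[where F="at_right 0"]) (auto simp: eventually_mono)
      then show ?thesis using c2 by (simp add: E_def)
    qed
  qed
  show ?thesis
  proof (rule ccontr)
    assume "\<not> ?thesis"
    then have pos: "Dv - (2*\<alpha> + 4*\<beta> - 4*\<Phi> 1) > 0" by simp
    define \<epsilon> where "\<epsilon> = (Dv - (2*\<alpha> + 4*\<beta> - 4*\<Phi> 1)) / (2*(X+1))"
    have e: "\<epsilon> > 0" using pos X by (simp add: \<epsilon>_def)
    have q: "X / (2*(X+1)) < 1" using X by (simp add: field_simps)
    have "\<epsilon> * X = (Dv - (2*\<alpha> + 4*\<beta> - 4*\<Phi> 1)) * (X / (2*(X+1)))"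
      unfolding \<epsilon>_def by simp
    also have "\<dots> < (Dv - (2*\<alpha> + 4*\<beta> - 4*\<Phi> 1)) * 1"
      using pos q by (intro mult_strict_left_mono) auto
    finally have "\<epsilon> * X < Dv - (2*\<alpha> + 4*\<beta> - 4*\<Phi> 1)" by simp
    with eps[OF e] show False by simp
  qed
qed



definition rho :: "real \<Rightarrow> real" where "rho t = (max 0 t)^2"
definition rho' :: "real \<Rightarrow> real" where "rho' t = 2 * max 0 t"

lemma rho_deriv: "(rho has_real_derivative rho' t) (at t)"
proof -
  consider "t > 0" | "t < 0" | "t = 0" by linarith
  then show ?thesis
  proof cases
    case 1
    have "((\<lambda>t. t^2) has_real_derivative rho' t) (at t)" using 1 by (auto intro!: derivative_eq_intros simp: rho'_def)
    then show ?thesis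
      by (rule has_field_derivative_transform_within_open[where S="{0<..}"]) (use 1 in \<open>auto simp: rho_def\<close>)
  next
    case 2
    have "((\<lambda>t. 0) has_real_derivative rho' t) (at t)" using 2 by (auto intro!: derivative_eq_intros simp: rho'_def)
    then show ?thesis
      by (rule has_field_derivative_transform_within_open[where S="{..<0}"]) (use 2 in \<open>auto simp: rho_def\<close>)
  next
    case 3
    have "((\<lambda>h. max 0 h) \<longlongrightarrow> max 0 0) (at (0::real))"
      by (intro tendsto_intros)
    then have "((\<lambda>h. max 0 h) \<longlongrightarrow> 0) (at (0::real))" by simp
    then have "((\<lambda>h. (rho (0 + h) - rho 0) / h) \<longlongrightarrow> 0) (at (0::real))"
    proof (rule Lim_transform_eventually)
      show "\<forall>\<^sub>F h in at 0. max 0 h = (rho (0 + h) - rho 0) / h"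
        by (auto simp: eventually_at_filter rho_def power2_eq_square max_def)
    qed
    then show ?thesis using 3 by (simp add: DERIV_def rho'_def)
  qed
qed

lemma cont_rho: "continuous_on UNIV rho" "continuous_on UNIV rho'"
  unfolding rho_def rho'_def by (auto intro!: continuous_intros)

definition bump :: "real \<Rightarrow> real \<Rightarrow> real \<Rightarrow> real" where "bump a b t = rho (t-a) * rho (b-t)"
definition bump' :: "real \<Rightarrow> real \<Rightarrow> real \<Rightarrow> real" where
  "bump' a b t = rho' (t-a) * rho (b-t) - rho (t-a) * rho' (b-t)"

lemma bump_deriv: "(bump a b has_real_derivative bump' a b t) (at t)"
  unfolding bump_def bump'_def
  by (auto intro!: derivative_eq_intros DERIV_chain2[OF rho_deriv])

lemma bump_cont: "continuous_on UNIV (bump a b)" "continuous_on UNIV (bump' a b)"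
  unfolding bump_def bump'_def
  by (auto intro!: continuous_intros continuous_on_compose2[OF cont_rho(1)] continuous_on_compose2[OF cont_rho(2)])

lemma bump_nonneg: "bump a b t \<ge> 0" by (simp add: bump_def rho_def)

lemma bump_pos_iff: "bump a b t > 0 \<longleftrightarrow> a < t \<and> t < b"
  by (auto simp: bump_def rho_def max_def zero_less_mult_iff)

definition bb :: "R2 \<Rightarrow> R2 \<Rightarrow> R2 \<Rightarrow> real" where
  "bb a b x = bump (a$1) (b$1) (x$1) * bump (a$2) (b$2) (x$2)"

lemma bb_nonneg: "bb a b x \<ge> 0" by (simp add: bb_def bump_nonneg)

lemma bb_pos_iff: "bb a b x > 0 \<longleftrightarrow> x \<in> box a b"
proof -
  have "bb a b x > 0 \<longleftrightarrow> bump (a$1) (b$1) (x$1) > 0 \<and> bump (a$2) (b$2) (x$2) > 0"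
    using bump_nonneg[of "a$1" "b$1" "x$1"] bump_nonneg[of "a$2" "b$2" "x$2"]
    by (auto simp: bb_def zero_less_mult_iff)
  also have "\<dots> \<longleftrightarrow> x \<in> box a b"
    by (simp add: bump_pos_iff mem_box_cart forall_2)
  finally show ?thesis .
qed

lemma inv_pow_deriv:
  fixes y :: real
  assumes ne: "1 + y \<noteq> 0"
  shows "((\<lambda>y. 1 - inverse ((1 + y)^k)) has_real_derivative real k * inverse ((1+y)^(k+1))) (at y)"
proof -
  have d: "((\<lambda>y. (1 + y)^k) has_real_derivative real k * (1+y)^(k-1)) (at y)"
    by (auto intro!: derivative_eq_intros)
  have d2: "((\<lambda>y. 1 - inverse ((1 + y)^k)) has_real_derivative
      0 - (- (inverse ((1+y)^k) * (real k * (1+y)^(k-1)) * inverse ((1+y)^k)))) (at y)"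
    by (intro DERIV_diff DERIV_const DERIV_inverse' d) (use ne in simp)
  have eq: "0 - (- (inverse ((1+y)^k) * (real k * (1+y)^(k-1)) * inverse ((1+y)^k))) = real k * inverse ((1+y)^(k+1))"
  proof (cases k)
    case 0 then show ?thesis by simp
  next
    case (Suc m)
    define z where "z = 1 + y"
    have z: "z \<noteq> 0" using ne z_def by simp
    have h: "inverse (z^Suc m) * (c * z^m) * inverse (z^Suc m) = c * inverse (z^(Suc m + 1))" for c
      using z by (simp add: field_simps power_add)
    have "0 - (- (inverse ((1+y)^k) * (real k * (1+y)^(k-1)) * inverse ((1+y)^k))) = inverse (z^Suc m) * (real k * z^m) * inverse (z^Suc m)"
      using Suc z_def by simp
    also have "\<dots> = real k * inverse (z^(Suc m + 1))" by (rule h)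
    finally show ?thesis using Suc z_def by simp
  qed
  show ?thesis using d2 unfolding eq .
qed

definition phk :: "nat \<Rightarrow> R2 \<Rightarrow> R2 \<Rightarrow> R2 \<Rightarrow> real" where
  "phk k a b x = 1 - inverse ((1 + bb a b x)^k)"

definition phk' :: "nat \<Rightarrow> R2 \<Rightarrow> R2 \<Rightarrow> R2 \<Rightarrow> R2 \<Rightarrow> real" where
  "phk' k a b x v = real k * inverse ((1 + bb a b x)^(k+1)) *
     (bump' (a$1) (b$1) (x$1) * v$1 * bump (a$2) (b$2) (x$2) + bump (a$1) (b$1) (x$1) * (bump' (a$2) (b$2) (x$2) * v$2))"

lemma comp_deriv:
  assumes "(g has_real_derivative g') (at (x$i))"
  shows "((\<lambda>x::R2. g (x$i)) has_derivative (\<lambda>v. g' * v$i)) (at x)"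
proof -
  have c: "((\<lambda>x::R2. x$i) has_derivative (\<lambda>v. v$i)) (at x)"
    by (rule bounded_linear_imp_has_derivative[OF bounded_linear_vec_nth])
  show ?thesis
    using has_derivative_compose[OF c assms[unfolded has_field_derivative_def]] by simp
qed

lemma phk_deriv: "(phk k a b has_derivative phk' k a b x) (at x)"
proof -
  have b1: "((\<lambda>x::R2. bump (a$1) (b$1) (x$1)) has_derivative (\<lambda>v. bump' (a$1) (b$1) (x$1) * v$1)) (at x)"
    by (rule comp_deriv[OF bump_deriv])
  have b2: "((\<lambda>x::R2. bump (a$2) (b$2) (x$2)) has_derivative (\<lambda>v. bump' (a$2) (b$2) (x$2) * v$2)) (at x)"
    by (rule comp_deriv[OF bump_deriv])
  have bbd: "(bb a b has_derivative (\<lambda>v. bump (a$1) (b$1) (x$1) * (bump' (a$2) (b$2) (x$2) * v$2) + bump' (a$1) (b$1) (x$1) * v$1 * bump (a$2) (b$2) (x$2))) (at x)"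
    unfolding bb_def[abs_def] using has_derivative_mult[OF b1 b2] by simp
  have ne: "1 + bb a b x \<noteq> 0" using bb_nonneg[of a b x] by linarith
  have th: "((\<lambda>y. 1 - inverse ((1 + y)^k)) has_real_derivative real k * inverse ((1 + bb a b x)^(k+1))) (at (bb a b x))"
    by (rule inv_pow_deriv[OF ne])
  show ?thesis
    using has_derivative_compose[OF bbd th[unfolded has_field_derivative_def]]
    unfolding phk_def[abs_def] phk'_def by (simp add: algebra_simps)
qed



lemma phk_supp: "phk k a b x \<noteq> 0 \<Longrightarrow> x \<in> box a b"
proof -
  assume "phk k a b x \<noteq> 0"
  then have "bb a b x \<noteq> 0" by (auto simp: phk_def)
  then have "bb a b x > 0" using bb_nonneg[of a b x] by linarith
  then show ?thesis using bb_pos_iff by blast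
qed

lemma cont_comp_nth:
  assumes "continuous_on UNIV g"
  shows "continuous_on UNIV (\<lambda>x::R2. g (x$i))"
  by (rule continuous_on_compose2[OF assms]) (auto intro: continuous_intros)

lemma phk_test: "test_fun (phk k a b)"
  unfolding test_fun_def
proof (intro conjI allI)
  have "{x. phk k a b x \<noteq> 0} \<subseteq> box a b" using phk_supp by blast
  then have "bounded {x. phk k a b x \<noteq> 0}" using bounded_box bounded_subset by blast
  then show "compact (closure {x. phk k a b x \<noteq> 0})" by simp
next
  fix x show "phk k a b differentiable at x" using phk_deriv by (rule differentiableI)
next
  fix i :: 2
  have eq: "(\<lambda>x. frechet_derivative (phk k a b) (at x) (axis i 1)) = (\<lambda>x. phk' k a b x (axis i 1))"
    using frechet_derivative_at[OF phk_deriv] by metis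
  have ne: "(1 + bb a b x)^(k+1) \<noteq> 0" for x using bb_nonneg[of a b x] by simp
  have cbb: "continuous_on UNIV (bb a b)"
    unfolding bb_def[abs_def]
    by (intro continuous_intros cont_comp_nth bump_cont)
  show "continuous_on UNIV (\<lambda>x. frechet_derivative (phk k a b) (at x) (axis i 1))"
    unfolding eq phk'_def
    by (intro continuous_intros cont_comp_nth bump_cont cbb) (use ne in auto)
qed

lemma phk_bound: "\<bar>phk k a b x\<bar> \<le> 1"
proof -
  have "0 < inverse ((1 + bb a b x)^k)" using bb_nonneg[of a b x] by simp
  moreover have "1 \<le> (1 + bb a b x)^k" using bb_nonneg[of a b x] by (simp add: one_le_power)
  then have "inverse ((1 + bb a b x)^k) \<le> 1" by (simp add: inverse_le_1_iff)
  ultimately show ?thesis by (simp add: phk_def)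
qed

lemma phk_lim: "(\<lambda>k. phk k a b x) \<longlonglongrightarrow> indicator (box a b) x"
proof (cases "x \<in> box a b")
  case True
  then have p: "bb a b x > 0" using bb_pos_iff by blast
  have "(\<lambda>k. (inverse (1 + bb a b x))^k) \<longlonglongrightarrow> 0"
    using p by (intro LIMSEQ_realpow_zero) (auto simp: inverse_less_1_iff)
  then have "(\<lambda>k. 1 - (inverse (1 + bb a b x))^k) \<longlonglongrightarrow> 1 - 0" by (rule tendsto_diff[OF tendsto_const])
  then show ?thesis using True by (simp add: phk_def power_inverse)
next
  case False
  then have "bb a b x = 0" using bb_pos_iff bb_nonneg[of a b x] by (metis less_eq_real_def)
  then show ?thesis using False by (simp add: phk_def)
qed

lemma phk_meas: "phk k a b \<in> borel_measurable lborel"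
proof -
  have "continuous_on UNIV (phk k a b)"
    using phk_deriv by (metis continuous_at_imp_continuous_on has_derivative_continuous)
  then show ?thesis by (simp add: borel_measurable_continuous_onI)
qed



lemma ae_zero_boxes:
  fixes k :: "'a::euclidean_space \<Rightarrow> real"
  assumes int: "integrable lborel k"
    and z: "\<And>a b. (\<integral>x. k x * indicator (box a b) x \<partial>lborel) = 0"
  shows "AE x in lborel. k x = 0"
proof -
  define kp where "kp x = max 0 (k x)" for x
  define kn where "kn x = max 0 (- k x)" for x
  have [measurable]: "k \<in> borel_measurable lborel" using int by auto
  have [measurable]: "kp \<in> borel_measurable lborel" "kn \<in> borel_measurable lborel"
    unfolding kp_def[abs_def] kn_def[abs_def] by auto
  have ip: "integrable lborel kp" unfolding kp_def[abs_def] using int by (intro integrable_max) auto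
  have inn: "integrable lborel kn" unfolding kn_def[abs_def] using int by (intro integrable_max) auto
  have intA: "integrable lborel (\<lambda>x. f x * indicator A x)" if "integrable lborel f" "A \<in> sets borel" for f :: "'a \<Rightarrow> real" and A
    using integrable_mult_indicator[OF _ that(1), of A] that(2) by (simp add: mult.commute)
  define M where "M = density lborel (\<lambda>x. ennreal (kp x))"
  define N where "N = density lborel (\<lambda>x. ennreal (kn x))"
  have emM: "emeasure M A = ennreal (\<integral>x. kp x * indicator A x \<partial>lborel)" if A: "A \<in> sets borel" for A
  proof -
    have "emeasure M A = (\<integral>\<^sup>+x. ennreal (kp x) * indicator A x \<partial>lborel)"
      unfolding M_def using A by (subst emeasure_density) auto
    also have "\<dots> = (\<integral>\<^sup>+x. ennreal (kp x * indicator A x) \<partial>lborel)"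
      by (intro nn_integral_cong) (auto simp: indicator_def)
    also have "\<dots> = ennreal (\<integral>x. kp x * indicator A x \<partial>lborel)"
      using A by (intro nn_integral_eq_integral intA ip)
        (auto simp: kp_def indicator_def)
    finally show ?thesis .
  qed
  have emN: "emeasure N A = ennreal (\<integral>x. kn x * indicator A x \<partial>lborel)" if A: "A \<in> sets borel" for A
  proof -
    have "emeasure N A = (\<integral>\<^sup>+x. ennreal (kn x) * indicator A x \<partial>lborel)"
      unfolding N_def using A by (subst emeasure_density) auto
    also have "\<dots> = (\<integral>\<^sup>+x. ennreal (kn x * indicator A x) \<partial>lborel)"
      by (intro nn_integral_cong) (auto simp: indicator_def)
    also have "\<dots> = ennreal (\<integral>x. kn x * indicator A x \<partial>lborel)"
      using A by (intro nn_integral_eq_integral intA inn)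
        (auto simp: kn_def indicator_def)
    finally show ?thesis .
  qed
  have "M = N"
  proof (rule measure_eqI_generator_eq[where E="range (\<lambda>(a, b). box a b)" and \<Omega>=UNIV and A="\<lambda>n::nat. box (- (real n *\<^sub>R One)) (real n *\<^sub>R One)"])
    show "Int_stable (range (\<lambda>(a, b). box a b::'a set))"
      by (auto simp: Int_stable_def box_Int_box)
    show "range (\<lambda>(a, b). box a b) \<subseteq> Pow (UNIV::'a set)" by simp
    show "sets M = sigma_sets UNIV (range (\<lambda>(a, b). box a b))"
      "sets N = sigma_sets UNIV (range (\<lambda>(a, b). box a b))"
      unfolding M_def N_def by (simp_all add: borel_eq_box)
    show "range (\<lambda>n::nat. box (- (real n *\<^sub>R One)) (real n *\<^sub>R One)) \<subseteq> range (\<lambda>(a, b). box a b :: 'a set)"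
      by auto
    show "(\<Union>i::nat. box (- (real i *\<^sub>R One)) (real i *\<^sub>R One)) = (UNIV::'a set)"
      by (rule UN_box_eq_UNIV)
    show "emeasure M (box (- (real i *\<^sub>R One)) (real i *\<^sub>R One)) \<noteq> \<infinity>" for i
      by (subst emM) auto
    fix X assume "X \<in> range (\<lambda>(a, b). box a b :: 'a set)"
    then obtain a b where X: "X = box a b" by auto
    have "(\<integral>x. kp x * indicator X x \<partial>lborel) - (\<integral>x. kn x * indicator X x \<partial>lborel)
          = (\<integral>x. kp x * indicator X x - kn x * indicator X x \<partial>lborel)"
      using X by (intro Bochner_Integration.integral_diff[symmetric] intA ip inn) auto
    also have "\<dots> = (\<integral>x. k x * indicator X x \<partial>lborel)"
      by (intro Bochner_Integration.integral_cong) (auto simp: kp_def kn_def indicator_def)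
    also have "\<dots> = 0" using z X by simp
    finally show "emeasure M X = emeasure N X" using X by (simp add: emM emN)
  qed
  then have "AE x in lborel. ennreal (kp x) = ennreal (kn x)"
    unfolding M_def N_def by (intro sigma_finite_measure.density_unique[OF sigma_finite_lborel]) auto
  then show ?thesis
    by eventually_elim (auto simp: kp_def kn_def max_def split: if_splits)
qed



lemma loc_bound:
  fixes g :: "R2 \<Rightarrow> R2"
  assumes "\<bar>c\<bar> \<le> 1" "x \<notin> cbox a b \<Longrightarrow> c = 0"
  shows "\<bar>g x $ i * c\<bar> \<le> (norm (g x))^2 + indicator (cbox a b) x"
proof (cases "x \<in> cbox a b")
  case True
  have "\<bar>g x $ i * c\<bar> \<le> \<bar>g x $ i\<bar> * 1" unfolding abs_mult using assms(1) by (intro mult_left_mono) auto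
  also have "\<dots> \<le> norm (g x)" by (simp add: component_le_norm_cart)
  also have "\<dots> \<le> (norm (g x))^2 + 1"
  proof (cases "norm (g x) \<le> 1")
    case True then show ?thesis by (simp add: add_increasing)
  next
    case False
    then have "norm (g x) * 1 \<le> norm (g x) * norm (g x)" by (intro mult_left_mono) auto
    then show ?thesis by (simp add: power2_eq_square)
  qed
  finally show ?thesis using True by simp
next
  case False then show ?thesis using assms(2) by simp
qed

lemma nth_meas: "(\<lambda>v::R2. v$i) \<in> borel_measurable borel"
  by (intro borel_measurable_continuous_onI continuous_intros)

lemma ind_cbox_int: "integrable lborel (indicat_real (cbox (a::R2) b))"
  using emeasure_lborel_cbox_finite[of a b] by (simp add: integrable_indicator_iff)

lemma L2_grad_meas:
  assumes "L2_grad u g"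
  shows "(\<lambda>x. g x $ i) \<in> borel_measurable lborel" "integrable lborel (\<lambda>x. (norm (g x))^2)"
  using assms measurable_compose[OF _ nth_meas] unfolding L2_grad_def by auto

lemma int_loc:
  fixes g :: "R2 \<Rightarrow> R2"
  assumes L: "L2_grad u g" and c: "\<And>x. \<bar>c x\<bar> \<le> 1" "\<And>x. x \<notin> cbox a b \<Longrightarrow> c x = 0"
    and cm: "c \<in> borel_measurable lborel"
  shows "integrable lborel (\<lambda>x. g x $ i * c x)"
proof (rule Bochner_Integration.integrable_bound)
  show "integrable lborel (\<lambda>x. (norm (g x))^2 + indicator (cbox a b) x)"
    using L2_grad_meas[OF L] by (intro Bochner_Integration.integrable_add) (auto simp: ind_cbox_int)
  show "(\<lambda>x. g x $ i * c x) \<in> borel_measurable lborel" using L2_grad_meas[OF L] cm by measurable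
  show "AE x in lborel. norm (g x $ i * c x) \<le> norm ((norm (g x))^2 + indicator (cbox a b) x)"
    using loc_bound[of "c _" _ a b g i] c by (auto simp: indicator_def)
qed

lemma comp_unique:
  assumes L1: "L2_grad u g1" and L2: "L2_grad u g2"
  shows "AE x in lborel. g1 x $ i = g2 x $ i"
proof -
  define h where "h x = g1 x $ i - g2 x $ i" for x
  have m1: "(\<lambda>x. g1 x $ i) \<in> borel_measurable lborel" and m2: "(\<lambda>x. g2 x $ i) \<in> borel_measurable lborel"
    using L2_grad_meas L1 L2 by auto
  have hm: "h \<in> borel_measurable lborel" unfolding h_def[abs_def] using m1 m2 by measurable
  have A: "(\<integral>x. h x * phk k a b x \<partial>lborel) = 0" for k a b
  proof -
    have w1: "(\<integral>x. u x * frechet_derivative (phk k a b) (at x) (axis i 1) \<partial>lborel) = - (\<integral>x. g1 x $ i * phk k a b x \<partial>lborel)"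
      using L1 phk_test unfolding L2_grad_def weak_grad_def by blast
    have w2: "(\<integral>x. u x * frechet_derivative (phk k a b) (at x) (axis i 1) \<partial>lborel) = - (\<integral>x. g2 x $ i * phk k a b x \<partial>lborel)"
      using L2 phk_test unfolding L2_grad_def weak_grad_def by blast
    have c: "\<And>x. \<bar>phk k a b x\<bar> \<le> 1" "\<And>x. x \<notin> cbox a b \<Longrightarrow> phk k a b x = 0"
      using phk_bound phk_supp box_subset_cbox by blast+
    have i1: "integrable lborel (\<lambda>x. g1 x $ i * phk k a b x)" by (rule int_loc[OF L1 c phk_meas])
    have i2: "integrable lborel (\<lambda>x. g2 x $ i * phk k a b x)" by (rule int_loc[OF L2 c phk_meas])
    have "(\<integral>x. h x * phk k a b x \<partial>lborel) = (\<integral>x. g1 x $ i * phk k a b x - g2 x $ i * phk k a b x \<partial>lborel)"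
      by (simp add: h_def algebra_simps)
    also have "\<dots> = (\<integral>x. g1 x $ i * phk k a b x \<partial>lborel) - (\<integral>x. g2 x $ i * phk k a b x \<partial>lborel)"
      using i1 i2 by simp
    also have "\<dots> = 0" using w1 w2 by simp
    finally show ?thesis .
  qed
  have B: "(\<integral>x. h x * indicator (box a b) x \<partial>lborel) = 0" for a b
  proof -
    have "(\<lambda>k. \<integral>x. h x * phk k a b x \<partial>lborel) \<longlonglongrightarrow> (\<integral>x. h x * indicator (box a b) x \<partial>lborel)"
    proof (rule integral_dominated_convergence[where w="\<lambda>x. (norm (g1 x))^2 + (norm (g2 x))^2 + 2 * indicator (cbox a b) x"])
      show "(\<lambda>x. h x * indicator (box a b) x) \<in> borel_measurable lborel" using hm by measurable
      show "(\<lambda>x. h x * phk k a b x) \<in> borel_measurable lborel" for k using hm phk_meas by measurable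
      show "integrable lborel (\<lambda>x. (norm (g1 x))^2 + (norm (g2 x))^2 + 2 * indicator (cbox a b) x)"
        using L2_grad_meas[OF L1] L2_grad_meas[OF L2]
        by (intro Bochner_Integration.integrable_add integrable_mult_right) (auto simp: ind_cbox_int)
      show "AE x in lborel. (\<lambda>k. h x * phk k a b x) \<longlonglongrightarrow> h x * indicator (box a b) x"
        by (intro AE_I2 tendsto_mult tendsto_const phk_lim)
      fix k
      show "AE x in lborel. norm (h x * phk k a b x) \<le> (norm (g1 x))^2 + (norm (g2 x))^2 + 2 * indicator (cbox a b) x"
      proof (intro AE_I2)
        fix x
        have c: "\<bar>phk k a b x\<bar> \<le> 1" "x \<notin> cbox a b \<Longrightarrow> phk k a b x = 0"
          using phk_bound phk_supp box_subset_cbox by blast+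
        have "norm (h x * phk k a b x) \<le> \<bar>g1 x $ i * phk k a b x\<bar> + \<bar>g2 x $ i * phk k a b x\<bar>"
          by (simp add: h_def left_diff_distrib abs_triangle_ineq4)
        also have "\<dots> \<le> (norm (g1 x))^2 + indicator (cbox a b) x + ((norm (g2 x))^2 + indicator (cbox a b) x)"
          by (intro add_mono loc_bound c) auto
        finally show "norm (h x * phk k a b x) \<le> (norm (g1 x))^2 + (norm (g2 x))^2 + 2 * indicator (cbox a b) x"
          by simp
      qed
    qed
    then show ?thesis using A by (simp add: LIMSEQ_const_iff)
  qed
  have C: "AE x in lborel. h x * indicator (box (- (real m *\<^sub>R One)) (real m *\<^sub>R One)) x = 0" for m :: nat
  proof (rule ae_zero_boxes)
    let ?B = "box (- (real m *\<^sub>R One)) (real m *\<^sub>R One) :: R2 set"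
    let ?C = "cbox (- (real m *\<^sub>R One)) (real m *\<^sub>R One) :: R2 set"
    have c: "\<And>x. \<bar>indicator ?B x\<bar> \<le> (1::real)" "\<And>x. x \<notin> ?C \<Longrightarrow> indicator ?B x = (0::real)"
      using box_subset_cbox by (auto simp: indicator_def)
    have "integrable lborel (\<lambda>x. g1 x $ i * indicator ?B x - g2 x $ i * indicator ?B x)"
      by (intro Bochner_Integration.integrable_diff int_loc[OF L1 c] int_loc[OF L2 c]) auto
    then show "integrable lborel (\<lambda>x. h x * indicator ?B x)"
      by (simp add: h_def algebra_simps)
    fix a b :: R2
    obtain c d :: R2 where cd: "?B \<inter> box a b = box c d" using box_Int_box by blast
    have "(\<integral>x. h x * indicator ?B x * indicator (box a b) x \<partial>lborel) = (\<integral>x. h x * indicator (box c d) x \<partial>lborel)"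
      by (intro Bochner_Integration.integral_cong) (auto simp: indicator_def cd[symmetric])
    also have "\<dots> = 0" by (rule B)
    finally show "(\<integral>x. h x * indicator ?B x * indicator (box a b) x \<partial>lborel) = 0" .
  qed
  have "AE x in lborel. \<forall>m::nat. h x * indicator (box (- (real m *\<^sub>R One)) (real m *\<^sub>R One)) x = 0"
    unfolding AE_all_countable using C by blast
  then have "AE x in lborel. h x = 0"
  proof eventually_elim
    case (elim x)
    obtain m :: nat where "x \<in> box (- (real m *\<^sub>R One)) (real m *\<^sub>R One)"
      using UN_box_eq_UNIV by blast
    then show ?case using elim[rule_format, of m] by simp
  qed
  then show ?thesis by eventually_elim (simp add: h_def)
qed

lemma L2_grad_unique:
  assumes L1: "L2_grad u g1" and L2: "L2_grad u g2"
  shows "AE x in lborel. g1 x = g2 x"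
proof -
  have "AE x in lborel. \<forall>i. g1 x $ i = g2 x $ i"
    by (intro eventually_all_finite comp_unique[OF L1 L2])
  then show ?thesis by eventually_elim (simp add: vec_eq_iff)
qed



lemma L2_grad_scale:
  assumes L: "L2_grad u g"
  shows "L2_grad (\<lambda>x. c * u x) (\<lambda>x. c *\<^sub>R g x)"
  unfolding L2_grad_def
proof (intro conjI)
  show "(\<lambda>x. c *\<^sub>R g x) \<in> borel_measurable lborel" using L unfolding L2_grad_def by auto
  have "integrable lborel (\<lambda>x. c^2 * (norm (g x))^2)" using L unfolding L2_grad_def by auto
  then show "integrable lborel (\<lambda>x. (norm (c *\<^sub>R g x))^2)" by (simp add: power_mult_distrib)
  show "weak_grad (\<lambda>x. c * u x) (\<lambda>x. c *\<^sub>R g x)"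
    unfolding weak_grad_def
  proof (intro allI impI)
    fix \<phi> i assume t: "test_fun \<phi>"
    have w: "(\<integral>x. u x * frechet_derivative \<phi> (at x) (axis i 1) \<partial>lborel) = - (\<integral>x. g x $ i * \<phi> x \<partial>lborel)"
      using L t unfolding L2_grad_def weak_grad_def by blast
    have "(\<integral>x. c * u x * frechet_derivative \<phi> (at x) (axis i 1) \<partial>lborel) = c * (\<integral>x. u x * frechet_derivative \<phi> (at x) (axis i 1) \<partial>lborel)"
      by (simp add: mult.assoc)
    also have "\<dots> = - (c * (\<integral>x. g x $ i * \<phi> x \<partial>lborel))" using w by simp
    also have "c * (\<integral>x. g x $ i * \<phi> x \<partial>lborel) = (\<integral>x. (c *\<^sub>R g x) $ i * \<phi> x \<partial>lborel)"
      by (simp add: mult.assoc)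
    finally show "(\<integral>x. c * u x * frechet_derivative \<phi> (at x) (axis i 1) \<partial>lborel) = - (\<integral>x. (c *\<^sub>R g x) $ i * \<phi> x \<partial>lborel)" .
  qed
qed

lemma grad_L2: assumes "u \<in> H1" shows "L2_grad u (grad u)"
proof -
  obtain g where g: "L2_grad u g" using assms unfolding H1_def by auto
  show ?thesis unfolding grad_def by (rule someI[of "L2_grad u", OF g])
qed

lemma H1_scale: "u \<in> H1 \<Longrightarrow> (\<lambda>x. c * u x) \<in> H1"
proof -
  assume u: "u \<in> H1"
  have "integrable lborel (\<lambda>x. c^2 * (u x)^2)" using u unfolding H1_def by auto
  then show ?thesis using u L2_grad_scale[OF grad_L2[OF u]] unfolding H1_def
    by (auto simp: power_mult_distrib)
qed

lemma grad_norm2_scale: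
  assumes u: "u \<in> H1"
  shows "grad_norm2 (\<lambda>x. c * u x) = c^2 * grad_norm2 u"
proof -
  have L1: "L2_grad (\<lambda>x. c * u x) (grad (\<lambda>x. c * u x))" by (rule grad_L2[OF H1_scale[OF u]])
  have L2: "L2_grad (\<lambda>x. c * u x) (\<lambda>x. c *\<^sub>R grad u x)" by (rule L2_grad_scale[OF grad_L2[OF u]])
  have ae: "AE x in lborel. grad (\<lambda>x. c * u x) x = c *\<^sub>R grad u x" by (rule L2_grad_unique[OF L1 L2])
  have "grad_norm2 (\<lambda>x. c * u x) = (\<integral>x. (norm (c *\<^sub>R grad u x))^2 \<partial>lborel)"
    unfolding grad_norm2_def
    using L1 L2 ae unfolding L2_grad_def by (intro integral_cong_AE) auto
  also have "\<dots> = c^2 * grad_norm2 u"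
    unfolding grad_norm2_def by (simp add: power_mult_distrib)
  finally show ?thesis .
qed

lemma Xspace_scale: "u \<in> Xspace \<Longrightarrow> (\<lambda>x. c * u x) \<in> Xspace"
proof -
  assume u: "u \<in> Xspace"
  have "integrable lborel (\<lambda>x. c^2 * (ln (1 + norm x) * (u x)^2))" using u unfolding Xspace_def by auto
  then show ?thesis using u H1_scale unfolding Xspace_def
    by (auto simp: power_mult_distrib mult.commute mult.left_commute)
qed

lemma X_norm_scale:
  assumes u: "u \<in> H1"
  shows "X_norm (\<lambda>x. c * u x) = \<bar>c\<bar> * X_norm u"
proof -
  have "X_norm (\<lambda>x. c * u x) = sqrt (c^2 * (grad_norm2 u + L2_norm2 u + (\<integral>x. ln (1 + norm x) * (u x)\<^sup>2 \<partial>lborel)))"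
    unfolding X_norm_def grad_norm2_scale[OF u] L2_norm2_def
    by (simp add: power_mult_distrib algebra_simps)
  also have "\<dots> = \<bar>c\<bar> * X_norm u" by (simp add: real_sqrt_mult X_norm_def)
  finally show ?thesis .
qed

lemma Pfun_scale: "Pfun V (\<lambda>x. c * u x) = c^4 * Pfun V u"
proof -
  have e: "(\<lambda>y. V (norm (x - y)) * (c * u x)\<^sup>2 * (c * u y)\<^sup>2) = (\<lambda>y. c^4 * (V (norm (x - y)) * (u x)\<^sup>2 * (u y)\<^sup>2))" for x
    by (rule ext) (simp add: power_mult_distrib mult_ac power_numeral_reduce)
  have "Pfun V (\<lambda>x. c * u x) = (\<integral>x. c^4 * (\<integral>y. V (norm (x - y)) * (u x)\<^sup>2 * (u y)\<^sup>2 \<partial>lborel) \<partial>lborel)"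
    unfolding Pfun_def e integral_mult_right_zero ..
  also have "\<dots> = c^4 * Pfun V u" unfolding Pfun_def by simp
  finally show ?thesis .
qed

lemma Ifun_scale:
  assumes u: "u \<in> H1"
  shows "Ifun a b \<mu> Q V f (\<lambda>x. c * u x) =
    (a/2 * grad_norm2 u + 1/2 * (\<integral>x. Q x * (u x)\<^sup>2 \<partial>lborel)) * c^2
    + (b/4 * (grad_norm2 u)^2 + \<mu>/4 * Pfun V u) * c^4
    - (\<integral>x. prim f (c * u x) \<partial>lborel)"
proof -
  have e: "(\<lambda>x. Q x * (c * u x)\<^sup>2) = (\<lambda>x. c^2 * (Q x * (u x)\<^sup>2))"
    by (rule ext) (simp add: power_mult_distrib mult_ac)
  have q: "(\<integral>x. Q x * (c * u x)\<^sup>2 \<partial>lborel) = c^2 * (\<integral>x. Q x * (u x)\<^sup>2 \<partial>lborel)"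
    unfolding e integral_mult_right_zero ..
  show ?thesis
    unfolding Ifun_def grad_norm2_scale[OF u] Pfun_scale q
    by (simp add: algebra_simps power_mult_distrib)
qed



lemma prim_nonneg:
  assumes ineq: "\<forall>t. t \<noteq> 0 \<longrightarrow> f t * t \<ge> \<theta> * prim f t \<and> prim f t > 0"
  shows "prim f t \<ge> 0"
  using ineq prim_zero[of f] by (cases "t = 0") (auto simp: less_imp_le)

lemma prim_mono_ge1:
  fixes f :: "real \<Rightarrow> real"
  assumes cf: "continuous_on UNIV f"
    and ineq: "\<forall>t. t \<noteq> 0 \<longrightarrow> f t * t \<ge> \<theta> * prim f t \<and> prim f t > 0" and th: "\<theta> \<ge> 4"
    and s: "s \<ge> 1"
  shows "prim f y \<le> prim f (s*y)"
proof -
  have "prim f ((1/s) * (s*y)) \<le> (1/s)^4 * prim f (s*y)"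
    using s by (intro F_scale_le[OF cf ineq th]) auto
  also have "\<dots> \<le> 1 * prim f (s*y)"
    using s prim_nonneg[OF ineq, of "s*y"] by (intro mult_right_mono) (auto simp: power_le_one)
  finally show ?thesis using s by simp
qed

lemma prim_meas:
  fixes f :: "real \<Rightarrow> real"
  assumes cf: "continuous_on UNIV f" and u: "u \<in> borel_measurable lborel"
  shows "(\<lambda>x. prim f (c * u x)) \<in> borel_measurable lborel"
proof -
  have "continuous_on UNIV (prim f)"
    using prim_deriv[OF cf] by (metis DERIV_isCont continuous_at_imp_continuous_on)
  then have "prim f \<in> borel_measurable borel" by (rule borel_measurable_continuous_onI)
  then show ?thesis using u by measurable
qed

lemma X_norm_nonneg: "X_norm u \<ge> 0"
proof -
  have "grad_norm2 u \<ge> 0" unfolding grad_norm2_def by (intro Bochner_Integration.integral_nonneg) auto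
  moreover have "L2_norm2 u \<ge> 0" unfolding L2_norm2_def by (intro Bochner_Integration.integral_nonneg) auto
  moreover have "(\<integral>x. ln (1 + norm x) * (u x)\<^sup>2 \<partial>lborel) \<ge> 0" by (intro Bochner_Integration.integral_nonneg) auto
  ultimately show ?thesis unfolding X_norm_def by simp
qed

lemma per_u:
  fixes u :: "R2 \<Rightarrow> real" and f :: "real \<Rightarrow> real" and Q :: "R2 \<Rightarrow> real"
  assumes uX: "u \<in> Xspace" and Fr: "frechet_X (Ifun a b \<mu> Q V f) u D"
    and Qge: "\<forall>x. Q0 \<le> Q x" and Qm: "Q \<in> borel_measurable lborel" and QM: "AE x in lborel. \<bar>Q x\<bar> \<le> M"
    and cf: "continuous_on UNIV f"
    and ineq: "\<forall>t. t \<noteq> 0 \<longrightarrow> f t * t \<ge> \<theta> * prim f t \<and> prim f t > 0" and th: "\<theta> \<ge> 4"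
    and Id: "Ifun a b \<mu> Q V f u \<le> d"
    and K: "\<bar>dual_norm D * (1 + X_norm u)\<bar> \<le> K"
  shows "a * grad_norm2 u + Q0 * L2_norm2 u \<le> 4 * d + K"
proof -
  have uH: "u \<in> H1" using uX unfolding Xspace_def by auto
  have um: "u \<in> borel_measurable lborel" and u2: "integrable lborel (\<lambda>x. (u x)^2)"
    using uH unfolding H1_def by auto
  define q where "q = (\<integral>x. Q x * (u x)\<^sup>2 \<partial>lborel)"
  define \<alpha> where "\<alpha> = a/2 * grad_norm2 u + 1/2 * q"
  define \<beta> where "\<beta> = b/4 * (grad_norm2 u)^2 + \<mu>/4 * Pfun V u"
  define \<Phi> where "\<Phi> s = (\<integral>x. prim f (s * u x) \<partial>lborel)" for s
  define g where "g s = Ifun a b \<mu> Q V f (\<lambda>x. s * u x)" for s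
  define X where "X = X_norm u"
  have gs: "\<forall>s. g s = \<alpha> * s^2 + \<beta> * s^4 - \<Phi> s"
    unfolding g_def Ifun_scale[OF uH] \<alpha>_def \<beta>_def \<Phi>_def q_def by (simp add: algebra_simps)
  have g1: "g 1 = Ifun a b \<mu> Q V f u" by (simp add: g_def)
  have X0: "X \<ge> 0" by (simp add: X_def X_norm_nonneg)
  obtain C where lin: "\<forall>v\<in>Xspace. \<forall>w\<in>Xspace. \<forall>s t. D (\<lambda>x. s * v x + t * w x) = s * D v + t * D w"
    and bnd: "\<forall>v\<in>Xspace. \<bar>D v\<bar> \<le> C * X_norm v"
    and fr: "\<forall>\<epsilon>>0. \<exists>\<delta>>0. \<forall>h\<in>Xspace. X_norm h < \<delta> \<longrightarrow>
         \<bar>Ifun a b \<mu> Q V f (\<lambda>x. u x + h x) - Ifun a b \<mu> Q V f u - D h\<bar> \<le> \<epsilon> * X_norm h"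
    using Fr unfolding frechet_X_def by blast
  have Dt: "D (\<lambda>x. t * u x) = t * D u" for t
    using lin[rule_format, OF uX uX, of t 0] by simp
  have Fr': "\<forall>\<epsilon>>0. \<exists>\<delta>>0. \<forall>t. \<bar>t\<bar> * X < \<delta> \<longrightarrow> \<bar>g (1+t) - g 1 - t * D u\<bar> \<le> \<epsilon> * (\<bar>t\<bar> * X)"
  proof (intro allI impI)
    fix \<epsilon> :: real assume e: "\<epsilon> > 0"
    obtain \<delta> where d: "\<delta> > 0" and dd: "\<forall>h\<in>Xspace. X_norm h < \<delta> \<longrightarrow>
         \<bar>Ifun a b \<mu> Q V f (\<lambda>x. u x + h x) - Ifun a b \<mu> Q V f u - D h\<bar> \<le> \<epsilon> * X_norm h"
      using fr e by blast
    show "\<exists>\<delta>>0. \<forall>t. \<bar>t\<bar> * X < \<delta> \<longrightarrow> \<bar>g (1+t) - g 1 - t * D u\<bar> \<le> \<epsilon> * (\<bar>t\<bar> * X)"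
    proof (intro exI[of _ \<delta>] conjI allI impI d)
      fix t assume t: "\<bar>t\<bar> * X < \<delta>"
      have hX: "(\<lambda>x. t * u x) \<in> Xspace" by (rule Xspace_scale[OF uX])
      have nh: "X_norm (\<lambda>x. t * u x) = \<bar>t\<bar> * X" unfolding X_def by (rule X_norm_scale[OF uH])
      have "(\<lambda>x. u x + t * u x) = (\<lambda>x. (1+t) * u x)" by (auto simp: algebra_simps)
      then show "\<bar>g (1+t) - g 1 - t * D u\<bar> \<le> \<epsilon> * (\<bar>t\<bar> * X)"
        using dd[rule_format, OF hX] t nh g1 Dt[of t] by (simp add: g_def)
    qed
  qed
  have pn: "\<And>t. prim f t \<ge> 0" by (rule prim_nonneg[OF ineq])
  have pm: "\<And>c. (\<lambda>x. prim f (c * u x)) \<in> borel_measurable lborel" by (rule prim_meas[OF cf um])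
  have cs: "(\<forall>s. 0<s \<and> s\<le>1 \<longrightarrow> \<Phi> s \<le> s^4 * \<Phi> 1) \<or> (\<Phi> 1 = 0 \<and> (\<forall>s. s\<ge>1 \<longrightarrow> \<Phi> s = 0))"
  proof (cases "integrable lborel (\<lambda>x. prim f (1 * u x))")
    case True
    have "\<Phi> s \<le> s^4 * \<Phi> 1" if s: "0 < s" "s \<le> 1" for s
    proof -
      have le: "prim f (s * u x) \<le> s^4 * prim f (1 * u x)" for x
        using F_scale_le[OF cf ineq th s] by simp
      have i2: "integrable lborel (\<lambda>x. s^4 * prim f (1 * u x))" using True by simp
      have i1: "integrable lborel (\<lambda>x. prim f (s * u x))"
        by (rule Bochner_Integration.integrable_bound[OF i2 pm]) (use le pn s in \<open>auto intro!: AE_I2\<close>)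
      have "\<Phi> s \<le> (\<integral>x. s^4 * prim f (1 * u x) \<partial>lborel)"
        unfolding \<Phi>_def by (rule integral_mono[OF i1 i2 le])
      then show ?thesis by (simp add: \<Phi>_def)
    qed
    then show ?thesis by blast
  next
    case False
    have "\<Phi> s = 0" if s: "s \<ge> 1" for s
    proof -
      have "\<not> integrable lborel (\<lambda>x. prim f (s * u x))"
      proof
        assume i: "integrable lborel (\<lambda>x. prim f (s * u x))"
        have "integrable lborel (\<lambda>x. prim f (1 * u x))"
          by (rule Bochner_Integration.integrable_bound[OF i pm])
            (use prim_mono_ge1[OF cf ineq th s] pn in \<open>auto intro!: AE_I2\<close>)
        then show False using False by simp
      qed
      then show ?thesis unfolding \<Phi>_def by (rule not_integrable_integral_eq)
    qed
    moreover have "\<Phi> 1 = 0" using calculation by simp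
    ultimately show ?thesis by blast
  qed
  have Dle: "D u \<le> 2*\<alpha> + 4*\<beta> - 4*\<Phi> 1" by (rule core[OF Fr' X0 gs cs])
  have I1: "Ifun a b \<mu> Q V f u = \<alpha> + \<beta> - \<Phi> 1" using gs g1 by simp
  have DK: "\<bar>D u\<bar> \<le> K"
  proof (cases "X = 0")
    case True
    then have "\<bar>D u\<bar> \<le> 0" using bnd uX X_def by fastforce
    then show ?thesis using K by linarith
  next
    case False
    then have Xp: "X > 0" using X0 by simp
    define v where "v x = (1/X) * u x" for x
    have vX: "v \<in> Xspace" unfolding v_def by (rule Xspace_scale[OF uX])
    have nv: "X_norm v = 1" unfolding v_def X_norm_scale[OF uH] using Xp by (simp add: X_def)
    have bdd: "bdd_above ((\<lambda>v. \<bar>D v\<bar>) ` {v \<in> Xspace. X_norm v \<le> 1})"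
    proof (rule bdd_aboveI[of _ "max C 0"])
      fix y assume "y \<in> (\<lambda>v. \<bar>D v\<bar>) ` {v \<in> Xspace. X_norm v \<le> 1}"
      then obtain w where w: "w \<in> Xspace" "X_norm w \<le> 1" "y = \<bar>D w\<bar>" by auto
      have "0 \<le> X_norm w" by (rule X_norm_nonneg)
      then have "C * X_norm w \<le> max C 0"
        using w(2) by (cases "C \<ge> 0") (auto intro: mult_le_one simp: mult_nonpos_nonneg order_trans[OF mult_left_mono[of "X_norm w" 1 C]])
      then show "y \<le> max C 0" using bnd w by fastforce
    qed
    have Dv: "\<bar>D v\<bar> \<le> dual_norm D"
      unfolding dual_norm_def by (rule cSup_upper[OF _ bdd]) (use vX nv in auto)
    have "D u = X * D v"
    proof -
      have e: "(\<lambda>x. X * v x + 0 * v x) = u" using Xp by (auto simp: v_def)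
      show ?thesis using lin[rule_format, OF vX vX, of X 0] unfolding e by simp
    qed
    then have "\<bar>D u\<bar> = X * \<bar>D v\<bar>" using Xp by (simp add: abs_mult)
    also have "\<dots> \<le> X * dual_norm D" using Dv Xp by (simp add: mult_left_mono)
    also have "\<dots> \<le> (1 + X) * dual_norm D" using Dv by (simp add: mult_right_mono order_trans[OF abs_ge_zero])
    also have "\<dots> \<le> K" using K by (simp add: X_def mult.commute)
    finally show ?thesis .
  qed
  have qge: "Q0 * L2_norm2 u \<le> q"
  proof -
    have iq: "integrable lborel (\<lambda>x. Q x * (u x)\<^sup>2)"
    proof (rule Bochner_Integration.integrable_bound[where f="\<lambda>x. M * (u x)^2"])
      show "integrable lborel (\<lambda>x. M * (u x)^2)" using u2 by simp
      show "(\<lambda>x. Q x * (u x)\<^sup>2) \<in> borel_measurable lborel" using Qm um by measurable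
      show "AE x in lborel. norm (Q x * (u x)\<^sup>2) \<le> norm (M * (u x)^2)"
        using QM
      proof eventually_elim
        case (elim x)
        have "\<bar>Q x\<bar> * (u x)^2 \<le> M * (u x)^2" using elim by (intro mult_right_mono) auto
        moreover have "M * (u x)^2 \<le> \<bar>M * (u x)^2\<bar>" by simp
        ultimately show ?case by (simp add: abs_mult)
      qed
    qed
    have "Q0 * L2_norm2 u = (\<integral>x. Q0 * (u x)\<^sup>2 \<partial>lborel)" by (simp add: L2_norm2_def)
    also have "\<dots> \<le> q" unfolding q_def
      using u2 iq Qge by (intro integral_mono) (auto intro: mult_right_mono)
    finally show ?thesis .
  qed
  have "a * grad_norm2 u + q = 2 * \<alpha>" by (simp add: \<alpha>_def algebra_simps)
  also have "\<dots> \<le> 4 * Ifun a b \<mu> Q V f u - D u" using Dle I1 by simp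
  also have "\<dots> \<le> 4 * d + K" using Id DK by simp
  finally show ?thesis using qge by simp
qed



theorem lemma4p1:
  fixes a b \<mu> :: real and V :: "real \<Rightarrow> real" and Q :: "R2 \<Rightarrow> real" and f :: "real \<Rightarrow> real"
    and u :: "nat \<Rightarrow> R2 \<Rightarrow> real" and D :: "nat \<Rightarrow> (R2 \<Rightarrow> real) \<Rightarrow> real"
  assumes "a > 0" and "b \<ge> 0" and "\<mu> > 0"
    and "continuous_on {0<..} V"
    and "cond_V1 V" and "cond_V2 V" and "cond_V3 V"
    and "cond_Q Q" and "cond_f f"
    and "\<And>n. u n \<in> Xspace"
    and "\<exists>d>0. \<forall>n. Ifun a b \<mu> Q V f (u n) \<le> d"
    and "\<And>n. frechet_X (Ifun a b \<mu> Q V f) (u n) (D n)"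
    and "(\<lambda>n. dual_norm (D n) * (1 + X_norm (u n))) \<longlonglongrightarrow> 0"
  shows "\<exists>C. \<forall>n. H1_norm (u n) \<le> C"
proof -
  note ap = assms(1)
  obtain d where d: "\<forall>n. Ifun a b \<mu> Q V f (u n) \<le> d" using assms(11) by blast
  have Qc: "continuous_on UNIV Q" and Q0: "\<exists>Q0>0. \<forall>x. Q0 \<le> Q x"
    and Qint: "(\<exists>p>1. integrable lborel (\<lambda>x. \<bar>Q x\<bar> powr p)) \<or> (\<exists>M. AE x in lborel. \<bar>Q x\<bar> \<le> M)"
    using assms(8) unfolding cond_Q_def by auto
  obtain Q0 where Q0p: "Q0 > 0" and Qge: "\<forall>x. Q0 \<le> Q x" using Q0 by blast
  have Qm: "Q \<in> borel_measurable lborel" using Qc by (simp add: borel_measurable_continuous_onI)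
  obtain M where QM: "AE x in lborel. \<bar>Q x\<bar> \<le> M"
  proof -
    have "\<not> (\<exists>p>1. integrable lborel (\<lambda>x. \<bar>Q x\<bar> powr p))"
    proof
      assume "\<exists>p>1. integrable lborel (\<lambda>x. \<bar>Q x\<bar> powr p)"
      then obtain p where p: "p > 1" and ip: "integrable lborel (\<lambda>x. \<bar>Q x\<bar> powr p)" by blast
      have "integrable lborel (\<lambda>x::R2. Q0 powr p)"
      proof (rule Bochner_Integration.integrable_bound[OF ip])
        show "(\<lambda>x::R2. Q0 powr p) \<in> borel_measurable lborel" by simp
        show "AE x in lborel. norm (Q0 powr p) \<le> norm (\<bar>Q x\<bar> powr p)"
        proof (rule AE_I2)
          fix x
          have "Q0 powr p \<le> \<bar>Q x\<bar> powr p" using Qge[rule_format, of x] Q0p p by (intro powr_mono2) auto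
          then show "norm (Q0 powr p) \<le> norm (\<bar>Q x\<bar> powr p)" by simp
        qed
      qed
      moreover have "Q0 powr p \<noteq> 0" using Q0p by simp
      ultimately show False by (simp add: integrable_iff_bounded ennreal_mult_less_top)
    qed
    then show ?thesis using Qint that by blast
  qed
  have fc: "continuous_on UNIV f" and fth: "\<exists>\<theta>\<ge>4. \<forall>t. t \<noteq> 0 \<longrightarrow> f t * t \<ge> \<theta> * prim f t \<and> prim f t > 0"
    using assms(9) unfolding cond_f_def by auto
  obtain \<theta> where th: "\<theta> \<ge> 4" and ineq: "\<forall>t. t \<noteq> 0 \<longrightarrow> f t * t \<ge> \<theta> * prim f t \<and> prim f t > 0"
    using fth by blast
  have "Bseq (\<lambda>n. dual_norm (D n) * (1 + X_norm (u n)))"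
    using assms(13) by (intro convergent_imp_Bseq convergentI)
  then obtain K where K: "\<And>n. \<bar>dual_norm (D n) * (1 + X_norm (u n))\<bar> \<le> K"
    unfolding Bseq_def by auto
  define m where "m = min a Q0"
  have mp: "m > 0" using ap Q0p by (simp add: m_def)
  have "H1_norm (u n) \<le> sqrt ((4 * d + K) / m)" for n
  proof -
    have main: "a * grad_norm2 (u n) + Q0 * L2_norm2 (u n) \<le> 4 * d + K"
      by (rule per_u[OF assms(10) assms(12) Qge Qm QM fc ineq th d[rule_format] K])
    have G0: "grad_norm2 (u n) \<ge> 0" unfolding grad_norm2_def by (intro Bochner_Integration.integral_nonneg) auto
    have L0: "L2_norm2 (u n) \<ge> 0" unfolding L2_norm2_def by (intro Bochner_Integration.integral_nonneg) auto
    have "m * (grad_norm2 (u n) + L2_norm2 (u n)) \<le> a * grad_norm2 (u n) + Q0 * L2_norm2 (u n)"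
      using G0 L0 by (simp add: m_def distrib_left add_mono mult_right_mono)
    then have "m * (grad_norm2 (u n) + L2_norm2 (u n)) \<le> 4 * d + K" using main by linarith
    then have "grad_norm2 (u n) + L2_norm2 (u n) \<le> (4 * d + K) / m" using mp by (simp add: field_simps)
    then show ?thesis unfolding H1_norm_def by simp
  qed
  then show ?thesis by blast
qed

end
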